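(* Let $d \geq 2$ and $n \geq d$ be integers. Then for every real $Z \geq 2$, \[ \sum_{\substack{\mathbf{z} \in \mathbb{Z}^{n+1} \setminus \{\mathbf{0}\} \\ \|\mathbf{z}\| \leq Z}} \frac{1}{\|\nu_{d,n}(\mathbf{z})\|} = \left( \int_{\mathcal{B}_{n+1}(1)} \frac{\mathrm{d}\mathbf{t}}{\|\nu_{d,n}(\mathbf{t})\|} \right) Z^{n+1-d}\left(1 + O\left(\frac{\log Z}{Z}\right)\right), \] where the implied constant depends only on $d$ and $n$; moreover, if $n > d$ the error term can be taken to be $O(1/Z)$ instead of $O(\log Z/Z)$.
   Context: $\|\cdot\|$ is the Euclidean norm and $\mathcal{B}_{n+1}(1)$ is the closed unit ball in $\mathbb{R}^{n+1}$. $N_{d,n} = \binom{n+d}{d}$ and $\nu_{d,n} : \mathbb{R}^{n+1} \to \mathbb{R}^{N_{d,n}}$ is the Veronese map listing all monomials of degree $d$ in the $n+1$ coordinates in lexicographic order. *)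

theory Defs
  imports "HOL-Analysis.Analysis"
begin

text \<open>Exponent vectors of degree d in the coordinates indexed by 'n
  (the index set of the Veronese map nu_{d,n}; there are binom(n+d,d) of them).\<close>
definition veronese_exps :: "nat \<Rightarrow> ('n::finite \<Rightarrow> nat) set" where
  "veronese_exps d = {\<alpha>. (\<Sum>i\<in>UNIV. \<alpha> i) = d}"

text \<open>The Veronese map: the coordinate indexed by alpha is the monomial t^alpha.
  (The lexicographic listing order of the coordinates does not affect the norm.)\<close>
definition veronese :: "nat \<Rightarrow> real ^ 'n::finite \<Rightarrow> ('n \<Rightarrow> nat) \<Rightarrow> real" where
  "veronese d t = (\<lambda>\<alpha>. \<Prod>i\<in>UNIV. (t $ i) ^ (\<alpha> i))"

definition veronese_norm :: "nat \<Rightarrow> real ^ 'n::finite \<Rightarrow> real" where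
  "veronese_norm d t = L2_set (veronese d t) (veronese_exps d)"

definition int_points :: "real \<Rightarrow> (real ^ 'n::finite) set" where
  "int_points Z = {z. (\<forall>i. z $ i \<in> \<int>) \<and> z \<noteq> 0 \<and> norm z \<le> Z}"

end

theory Submission
  imports Defs
begin

lemma finite_exps: "finite (veronese_exps d :: ('n::finite \<Rightarrow> nat) set)"
proof -
  have "veronese_exps d \<subseteq> (PiE (UNIV::'n set) (\<lambda>_. {..d}))"
  proof
    fix \<alpha> :: "'n \<Rightarrow> nat" assume "\<alpha> \<in> veronese_exps d"
    then have s: "(\<Sum>i\<in>UNIV. \<alpha> i) = d" by (simp add: veronese_exps_def)
    have "\<alpha> i \<le> d" for i using member_le_sum[of i UNIV \<alpha>] s by simp
    then show "\<alpha> \<in> PiE UNIV (\<lambda>_. {..d})" by (simp add: PiE_UNIV_domain)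
  qed
  moreover have "finite (PiE (UNIV::'n set) (\<lambda>_. {..d}))" by (intro finite_PiE) auto
  ultimately show ?thesis by (rule finite_subset)
qed

lemma L2_set_abs: "L2_set f A = L2_set (\<lambda>x. \<bar>f x\<bar>) A"
  unfolding L2_set_def by simp

lemma L2_set_ge_member: "finite A \<Longrightarrow> a \<in> A \<Longrightarrow> \<bar>f a\<bar> \<le> L2_set f A"
proof -
  assume "finite A" "a \<in> A"
  then have "(f a)^2 \<le> (\<Sum>x\<in>A. (f x)^2)"
    by (intro member_le_sum) auto
  then have "sqrt ((f a)^2) \<le> L2_set f A" unfolding L2_set_def by (rule real_sqrt_le_mono)
  then show ?thesis by simp
qed

lemma vn_nonneg: "0 \<le> veronese_norm d t"
  by (simp add: veronese_norm_def)

lemma vn_lower: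
  fixes t :: "real^'n::finite"
  shows "norm t ^ d \<le> sqrt (real CARD('n)) ^ d * veronese_norm d t"
proof -
  obtain i where iM: "\<bar>t$i\<bar> = Max (range (\<lambda>j. \<bar>t$j\<bar>))"
  proof -
    have "Max (range (\<lambda>j. \<bar>t$j\<bar>)) \<in> range (\<lambda>j. \<bar>t$j\<bar>)" by (intro Max_in) auto
    then show ?thesis using that by (metis (no_types, lifting) rangeE)
  qed
  have i: "\<bar>t$j\<bar> \<le> \<bar>t$i\<bar>" for j unfolding iM by (rule Max_ge) auto
  have "norm t = L2_set (\<lambda>j. \<bar>t$j\<bar>) UNIV" by (simp add: norm_vec_def)
  also have "\<dots> \<le> L2_set (\<lambda>j. \<bar>t$i\<bar>) (UNIV::'n set)" by (intro L2_set_mono i) auto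
  also have "\<dots> = sqrt (real CARD('n)) * \<bar>t$i\<bar>" by (simp add: L2_set_constant)
  finally have 1: "norm t \<le> sqrt (real CARD('n)) * \<bar>t$i\<bar>" .
  define \<alpha> where "\<alpha> = (\<lambda>j::'n. if j = i then d else 0)"
  have \<alpha>E: "\<alpha> \<in> veronese_exps d" by (simp add: \<alpha>_def veronese_exps_def)
  have "veronese d t \<alpha> = (t$i)^d"
    unfolding veronese_def \<alpha>_def
    by (simp add: if_distrib[of "\<lambda>e. (t$_)^e"] prod.delta cong: if_cong)
  then have 2: "\<bar>t$i\<bar>^d \<le> veronese_norm d t"
    using L2_set_ge_member[OF finite_exps \<alpha>E, of "veronese d t"]
    by (simp add: veronese_norm_def power_abs)
  have "norm t ^ d \<le> (sqrt (real CARD('n)) * \<bar>t$i\<bar>)^d"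
    by (intro power_mono 1) simp
  also have "\<dots> = sqrt (real CARD('n))^d * \<bar>t$i\<bar>^d" by (simp add: power_mult_distrib)
  also have "\<dots> \<le> sqrt (real CARD('n))^d * veronese_norm d t"
    by (intro mult_left_mono 2) simp
  finally show ?thesis .
qed

lemma monomial_le:
  fixes t :: "real^'n::finite"
  assumes "\<alpha> \<in> veronese_exps d"
  shows "\<bar>veronese d t \<alpha>\<bar> \<le> norm t ^ d"
proof -
  have "\<bar>veronese d t \<alpha>\<bar> = (\<Prod>i\<in>UNIV. \<bar>t$i\<bar> ^ \<alpha> i)"
    by (simp add: veronese_def abs_prod power_abs)
  also have "\<dots> \<le> (\<Prod>i\<in>UNIV. norm t ^ \<alpha> i)"
    by (intro prod_mono conjI power_mono component_le_norm_cart) auto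
  also have "\<dots> = norm t ^ d"
    using assms by (simp add: power_sum[symmetric] veronese_exps_def)
  finally show ?thesis .
qed

lemma vn_upper:
  fixes t :: "real^'n::finite"
  shows "veronese_norm d t \<le> sqrt (real (card (veronese_exps d :: ('n \<Rightarrow> nat) set))) * norm t ^ d"
proof -
  have "veronese_norm d t = L2_set (\<lambda>\<alpha>. \<bar>veronese d t \<alpha>\<bar>) (veronese_exps d)"
    by (simp add: veronese_norm_def L2_set_abs[of "veronese d t"])
  also have "\<dots> \<le> L2_set (\<lambda>\<alpha>. norm t ^ d) (veronese_exps d :: ('n \<Rightarrow> nat) set)"
    by (intro L2_set_mono monomial_le) auto
  also have "\<dots> = sqrt (real (card (veronese_exps d :: ('n \<Rightarrow> nat) set))) * norm t ^ d"
    by (simp add: L2_set_constant)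
  finally show ?thesis .
qed

lemma vn_homog:
  fixes t :: "real^'n::finite"
  shows "veronese_norm d (c *\<^sub>R t) = \<bar>c\<bar>^d * veronese_norm d t"
proof -
  have "veronese d (c *\<^sub>R t) \<alpha> = c^d * veronese d t \<alpha>" if "\<alpha> \<in> veronese_exps d" for \<alpha>
  proof -
    have "veronese d (c *\<^sub>R t) \<alpha> = (\<Prod>i\<in>UNIV. c ^ \<alpha> i * (t$i)^(\<alpha> i))"
      by (simp add: veronese_def power_mult_distrib)
    also have "\<dots> = (\<Prod>i\<in>UNIV. c ^ \<alpha> i) * veronese d t \<alpha>"
      by (simp add: veronese_def prod.distrib)
    also have "\<dots> = c^d * veronese d t \<alpha>"
      using that by (simp add: power_sum[symmetric] veronese_exps_def)
    finally show ?thesis .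
  qed
  then have "veronese_norm d (c *\<^sub>R t) = L2_set (\<lambda>\<alpha>. \<bar>c\<bar>^d * veronese d t \<alpha>) (veronese_exps d)"
    unfolding veronese_norm_def L2_set_def
    by (intro arg_cong[where f=sqrt] sum.cong) (auto simp: power_mult_distrib power_abs[symmetric])
  also have "\<dots> = \<bar>c\<bar>^d * veronese_norm d t"
    by (simp add: veronese_norm_def L2_set_right_distrib)
  finally show ?thesis .
qed

lemma vn_zero: "d \<ge> 1 \<Longrightarrow> veronese_norm d (0::real^'n::finite) = 0"
proof -
  assume d: "d \<ge> 1"
  have "veronese d (0::real^'n) \<alpha> = 0" if "\<alpha> \<in> veronese_exps d" for \<alpha>
  proof -
    from that d have "(\<Sum>i\<in>UNIV. \<alpha> i) \<noteq> 0" by (simp add: veronese_exps_def)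
    then obtain i where "\<alpha> i \<noteq> 0" by (meson sum.neutral)
    then show ?thesis unfolding veronese_def
      by (intro prod_zero) (auto intro!: bexI[of _ i])
  qed
  then show ?thesis unfolding veronese_norm_def by (simp add: L2_set_0')
qed

lemma vn_pos: "t \<noteq> 0 \<Longrightarrow> veronese_norm d (t::real^'n::finite) > 0"
proof -
  assume "t \<noteq> 0"
  then have "0 < norm t ^ d" by simp
  also have "\<dots> \<le> sqrt (real CARD('n)) ^ d * veronese_norm d t" by (rule vn_lower)
  finally show ?thesis by (simp add: zero_less_mult_iff)
qed

lemma vn_cont: "continuous_on UNIV (veronese_norm d :: real^'n::finite \<Rightarrow> real)"
  unfolding veronese_norm_def L2_set_def veronese_def
  by (intro continuous_intros)

lemma power_diff_M:
  fixes x y M :: real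
  assumes "\<bar>x\<bar> \<le> M" "\<bar>y\<bar> \<le> M"
  shows "\<bar>x^k - y^k\<bar> * M \<le> k * M^k * \<bar>x - y\<bar>"
proof (induction k)
  case 0 then show ?case by simp
next
  case (Suc k)
  have M0: "0 \<le> M" using assms by linarith
  have "x^Suc k - y^Suc k = (x^k - y^k) * x + y^k * (x - y)" by (simp add: algebra_simps)
  then have "\<bar>x^Suc k - y^Suc k\<bar> * M \<le> (\<bar>x^k - y^k\<bar> * \<bar>x\<bar> + \<bar>y\<bar>^k * \<bar>x - y\<bar>) * M"
    by (intro mult_right_mono M0) (metis abs_mult abs_triangle_ineq power_abs)
  also have "\<dots> = (\<bar>x^k - y^k\<bar> * M) * \<bar>x\<bar> + \<bar>y\<bar>^k * \<bar>x - y\<bar> * M" by (simp add: algebra_simps)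
  also have "\<dots> \<le> (k * M^k * \<bar>x - y\<bar>) * M + M^k * \<bar>x - y\<bar> * M"
  proof (rule add_mono)
    show "\<bar>x ^ k - y ^ k\<bar> * M * \<bar>x\<bar> \<le> real k * M ^ k * \<bar>x - y\<bar> * M"
      by (rule mult_mono[OF Suc.IH assms(1)]) (use M0 in auto)
    have "\<bar>y\<bar>^k \<le> M^k" by (intro power_mono assms) auto
    then show "\<bar>y\<bar> ^ k * \<bar>x - y\<bar> * M \<le> M ^ k * \<bar>x - y\<bar> * M"
      by (intro mult_right_mono M0) auto
  qed
  also have "\<dots> = Suc k * M^Suc k * \<bar>x - y\<bar>" by (simp add: algebra_simps)
  finally show ?case .
qed

lemma prod_diff_M:
  fixes p q :: "'a \<Rightarrow> real"
  assumes "finite A" "0 \<le> M" "0 \<le> \<delta>"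
    and "\<And>i. i \<in> A \<Longrightarrow> \<bar>p i\<bar> \<le> M^(k i)" "\<And>i. i \<in> A \<Longrightarrow> \<bar>q i\<bar> \<le> M^(k i)"
    and "\<And>i. i \<in> A \<Longrightarrow> \<bar>p i - q i\<bar> * M \<le> k i * M^(k i) * \<delta>"
  shows "\<bar>prod p A - prod q A\<bar> * M \<le> real (sum k A) * M^(sum k A) * \<delta>"
  using assms(1,4,5,6)
proof (induction A rule: finite_induct)
  case empty then show ?case by simp
next
  case (insert a F)
  let ?P = "prod p F" and ?Q = "prod q F" and ?K = "sum k F"
  have P: "\<bar>?P\<bar> \<le> M^?K" using insert.prems(1)
    by (simp add: abs_prod power_sum) (intro prod_mono, auto)
  have Q: "\<bar>?Q\<bar> \<le> M^?K" using insert.prems(2)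
    by (simp add: abs_prod power_sum) (intro prod_mono, auto)
  have IH: "\<bar>?P - ?Q\<bar> * M \<le> real ?K * M^?K * \<delta>" using insert by auto
  have "p a * ?P - q a * ?Q = (p a - q a) * ?P + q a * (?P - ?Q)" by (simp add: algebra_simps)
  then have "\<bar>p a * ?P - q a * ?Q\<bar> * M \<le> (\<bar>p a - q a\<bar> * \<bar>?P\<bar> + \<bar>q a\<bar> * \<bar>?P - ?Q\<bar>) * M"
    by (intro mult_right_mono \<open>0 \<le> M\<close>) (metis abs_mult abs_triangle_ineq)
  also have "\<dots> = (\<bar>p a - q a\<bar> * M) * \<bar>?P\<bar> + \<bar>q a\<bar> * (\<bar>?P - ?Q\<bar> * M)" by (simp add: algebra_simps)
  also have "\<dots> \<le> (k a * M^(k a) * \<delta>) * M^?K + M^(k a) * (real ?K * M^?K * \<delta>)"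
  proof (rule add_mono)
    show "\<bar>p a - q a\<bar> * M * \<bar>?P\<bar> \<le> real (k a) * M ^ k a * \<delta> * M ^ ?K"
      by (rule mult_mono[OF insert.prems(3) P]) (use assms(2,3) in auto)
    show "\<bar>q a\<bar> * (\<bar>?P - ?Q\<bar> * M) \<le> M ^ k a * (real ?K * M ^ ?K * \<delta>)"
      by (rule mult_mono[OF insert.prems(2) IH]) (use assms(2,3) in auto)
  qed
  also have "\<dots> = real (k a + ?K) * M^(k a + ?K) * \<delta>" by (simp add: algebra_simps power_add)
  finally show ?case using insert by simp
qed

lemma monomial_lip:
  fixes x y :: "real^'n::finite"
  assumes "\<alpha> \<in> veronese_exps d" "norm x \<le> M" "norm y \<le> M"
  shows "\<bar>veronese d x \<alpha> - veronese d y \<alpha>\<bar> * M \<le> d * M^d * norm (x - y)"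
proof -
  have M0: "0 \<le> M" using assms norm_ge_zero order_trans by blast
  have "\<bar>veronese d x \<alpha> - veronese d y \<alpha>\<bar> * M \<le> (\<Sum>i\<in>UNIV. \<alpha> i) * M^(\<Sum>i\<in>UNIV. \<alpha> i) * norm (x - y)"
    unfolding veronese_def
  proof (rule prod_diff_M[where p="\<lambda>i. (x$i)^(\<alpha> i)" and q="\<lambda>i. (y$i)^(\<alpha> i)" and k=\<alpha>])
    fix i
    have xi: "\<bar>x$i\<bar> \<le> M" "\<bar>y$i\<bar> \<le> M" using assms component_le_norm_cart order_trans by blast+
    show "\<bar>(x$i)^(\<alpha> i)\<bar> \<le> M^(\<alpha> i)" "\<bar>(y$i)^(\<alpha> i)\<bar> \<le> M^(\<alpha> i)"
      using xi by (auto simp: power_abs intro!: power_mono)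
    have "\<bar>(x$i)^(\<alpha> i) - (y$i)^(\<alpha> i)\<bar> * M \<le> \<alpha> i * M^(\<alpha> i) * \<bar>x$i - y$i\<bar>"
      by (rule power_diff_M[OF xi])
    also have "\<dots> \<le> \<alpha> i * M^(\<alpha> i) * norm (x - y)"
      using component_le_norm_cart[of "x - y" i] M0 by (intro mult_left_mono) auto
    finally show "\<bar>(x$i)^(\<alpha> i) - (y$i)^(\<alpha> i)\<bar> * M \<le> \<alpha> i * M^(\<alpha> i) * norm (x - y)" .
  qed (use M0 in auto)
  moreover have "sum \<alpha> UNIV = d" using assms(1) by (simp add: veronese_exps_def)
  ultimately show ?thesis by simp
qed

lemma L2_set_diff: "\<bar>L2_set f A - L2_set g A\<bar> \<le> L2_set (\<lambda>x. f x - g x) A"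
proof -
  have "L2_set f A \<le> L2_set g A + L2_set (\<lambda>x. f x - g x) A"
    using L2_set_triangle_ineq[of g "\<lambda>x. f x - g x" A] by simp
  moreover have "L2_set g A \<le> L2_set f A + L2_set (\<lambda>x. f x - g x) A"
    using L2_set_triangle_ineq[of f "\<lambda>x. g x - f x" A] L2_set_abs[of "\<lambda>x. g x - f x"] L2_set_abs[of "\<lambda>x. f x - g x"]
    by (simp add: abs_minus_commute)
  ultimately show ?thesis by linarith
qed

lemma vn_lip:
  fixes x y :: "real^'n::finite"
  assumes "norm x \<le> M" "norm y \<le> M"
  shows "\<bar>veronese_norm d x - veronese_norm d y\<bar> * M
     \<le> real (card (veronese_exps d :: ('n \<Rightarrow> nat) set)) * d * M^d * norm (x - y)"
proof -
  have M0: "0 \<le> M" using assms norm_ge_zero order_trans by blast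
  have "\<bar>veronese_norm d x - veronese_norm d y\<bar> * M
      \<le> (\<Sum>\<alpha>\<in>veronese_exps d. \<bar>veronese d x \<alpha> - veronese d y \<alpha>\<bar>) * M"
    unfolding veronese_norm_def
    by (intro mult_right_mono M0 order_trans[OF L2_set_diff L2_set_le_sum_abs])
  also have "\<dots> = (\<Sum>\<alpha>\<in>veronese_exps d. \<bar>veronese d x \<alpha> - veronese d y \<alpha>\<bar> * M)"
    by (simp add: sum_distrib_right)
  also have "\<dots> \<le> (\<Sum>\<alpha>\<in>(veronese_exps d :: ('n \<Rightarrow> nat) set). d * M^d * norm (x - y))"
    by (intro sum_mono monomial_lip assms)
  also have "\<dots> = real (card (veronese_exps d :: ('n \<Rightarrow> nat) set)) * d * M^d * norm (x - y)"
    by simp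
  finally show ?thesis .
qed

lemma dyadic:
  fixes x \<rho> :: real
  assumes "0 < \<rho>" "\<rho> / 2^(Suc K) < x" "x \<le> \<rho>"
  shows "1 / x^p \<le> (\<Sum>i\<le>K. (2^(Suc i) / \<rho>)^p * (if x \<le> \<rho> / 2^i then 1 else 0))"
  using assms(2,3)
proof (induction K)
  case 0
  have x0: "0 < x" using assms(1) 0 by (smt (verit) divide_pos_pos zero_less_power)
  have "1 / x < 2 / \<rho>" using 0 x0 assms(1) by (simp add: field_simps)
  then have "(1/x)^p \<le> (2/\<rho>)^p" using x0 by (intro power_mono) auto
  then show ?case using 0 by (simp add: power_divide)
next
  case (Suc K)
  let ?t = "\<lambda>i. (2^(Suc i) / \<rho>)^p * (if x \<le> \<rho> / 2^i then 1 else 0::real)"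
  have nn: "0 \<le> ?t i" for i using assms(1) by simp
  show ?case
  proof (cases "\<rho> / 2^(Suc K) < x")
    case True
    then have "1 / x^p \<le> sum ?t {..K}" using Suc by auto
    also have "\<dots> \<le> sum ?t {..Suc K}" by (intro sum_mono2) (use assms(1) in auto)
    finally show ?thesis .
  next
    case False
    have x0: "0 < x" using assms(1) Suc.prems by (smt (verit) divide_pos_pos zero_less_power)
    have "1 / x < 2^(Suc (Suc K)) / \<rho>" using Suc.prems x0 assms(1) by (simp add: field_simps)
    then have "(1/x)^p \<le> (2^(Suc (Suc K)) / \<rho>)^p" using x0 by (intro power_mono) auto
    also have "\<dots> = ?t (Suc K)" using False by simp
    also have "\<dots> \<le> sum ?t {..Suc K}" by (intro member_le_sum nn) auto
    finally show ?thesis by (simp add: power_divide)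
  qed
qed

definition omega :: "'n::finite itself \<Rightarrow> real" where
  "omega _ = measure lborel (ball (0::real^'n) 1)"

lemma omega_pos: "omega TYPE('n::finite) > 0"
  unfolding omega_def by (rule content_ball_pos) simp

lemma content_cball0: "r \<ge> 0 \<Longrightarrow> measure lborel (cball (0::real^'n::finite) r) = r ^ CARD('n) * omega TYPE('n)"
  unfolding omega_def content_cball_conv_ball by (subst content_ball_conv_unit_ball) auto

lemma has_integral_ind_cball:
  "((\<lambda>t::real^'n::finite. if norm t \<le> r then c else 0) has_integral c * measure lborel (cball (0::real^'n) r)) UNIV"
proof -
  have "((\<lambda>x::real^'n. 1::real) has_integral measure lborel (cball (0::real^'n) r)) (cball 0 r)"
    by (rule has_integral_measure_lborel[OF borel_closed[OF closed_cball] emeasure_lborel_cball_finite])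
  from has_integral_mult_right[OF this, of c]
  have "((\<lambda>x::real^'n. c) has_integral c * measure lborel (cball (0::real^'n) r)) (cball 0 r)"
    by simp
  then have "((\<lambda>x::real^'n. if x \<in> cball (0::real^'n) r then c else 0) has_integral c * measure lborel (cball (0::real^'n) r)) UNIV"
    by (subst has_integral_restrict_UNIV)
  then show ?thesis by (simp add: dist_norm) 
qed

definition stepfun :: "real \<Rightarrow> nat \<Rightarrow> nat \<Rightarrow> real^'n::finite \<Rightarrow> real" where
  "stepfun \<rho> K p t = (\<Sum>i\<le>K. (2^(Suc i) / \<rho>)^p * (if norm t \<le> \<rho> / 2^i then 1 else 0))"

lemma stepfun_ge:
  assumes "0 < \<rho>" "\<rho> / 2^(Suc K) < norm t" "norm t \<le> \<rho>"
  shows "1 / norm t ^ p \<le> stepfun \<rho> K p t"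
  unfolding stepfun_def using dyadic[OF assms] .

lemma stepfun_nonneg: "0 < \<rho> \<Longrightarrow> 0 \<le> stepfun \<rho> K p t"
  unfolding stepfun_def by (intro sum_nonneg) auto

lemma stepfun_integral:
  assumes "0 < \<rho>" "p \<le> CARD('n::finite)"
  shows "((stepfun \<rho> K p :: real^'n \<Rightarrow> real) has_integral
           omega TYPE('n) * 2^p * \<rho>^(CARD('n) - p) * (\<Sum>i\<le>K. ((1/2)^(CARD('n) - p))^i)) UNIV"
proof -
  let ?N = "CARD('n)"
  have "((\<lambda>t::real^'n. \<Sum>i\<le>K. (if norm t \<le> \<rho> / 2^i then (2^(Suc i) / \<rho>)^p else 0)) has_integral
          (\<Sum>i\<le>K. (2^(Suc i) / \<rho>)^p * measure lborel (cball (0::real^'n) (\<rho> / 2^i)))) UNIV"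
    by (intro has_integral_sum has_integral_ind_cball) auto
  moreover have "(2^(Suc i) / \<rho>)^p * measure lborel (cball (0::real^'n) (\<rho> / 2^i))
        = omega TYPE('n) * 2^p * \<rho>^(?N - p) * ((1/2)^(?N - p))^i" for i
  proof -
    have e: "?N = p + (?N - p)" using assms(2) by simp
    have "(2^(Suc i) / \<rho>)^p * measure lborel (cball (0::real^'n) (\<rho> / 2^i))
        = (2^(Suc i) / \<rho>)^p * ((\<rho> / 2^i)^?N * omega TYPE('n))"
      using assms(1) by (subst content_cball0) auto
    also have "\<dots> = (2^(Suc i) / \<rho>)^p * ((\<rho> / 2^i)^(p + (?N - p)) * omega TYPE('n))"
      using e by metis
    also have "\<dots> = omega TYPE('n) * 2^p * \<rho>^(?N - p) * ((1/2)^(?N - p))^i"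
      using assms(1)
      by (simp add: power_add power_divide power_mult_distrib field_simps flip: power_mult)
    finally show ?thesis .
  qed
  ultimately show ?thesis
    unfolding stepfun_def by (simp add: if_distrib sum_distrib_left cong: if_cong)
qed

lemma geom_le_card: "q \<le> 1 \<Longrightarrow> 0 \<le> q \<Longrightarrow> (\<Sum>i\<le>K. (q::real)^i) \<le> real (Suc K)"
proof -
  assume "q \<le> 1" "0 \<le> q"
  then have "(\<Sum>i\<le>K. q^i) \<le> (\<Sum>i\<le>K. 1)" by (intro sum_mono power_le_one) auto
  then show ?thesis by simp
qed

lemma geom_le_2: "q \<le> 1/2 \<Longrightarrow> 0 \<le> q \<Longrightarrow> (\<Sum>i\<le>K. (q::real)^i) \<le> 2"
proof (induction K)
  case 0 then show ?case by simp
next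
  case (Suc K)
  have "(\<Sum>i\<le>Suc K. q^i) = 1 + q * (\<Sum>i\<le>K. q^i)"
    by (subst sum.atMost_Suc_shift) (simp add: sum_distrib_left del: sum.atMost_Suc)
  also have "\<dots> \<le> 1 + (1/2) * 2" using Suc by (intro add_left_mono mult_mono) (auto intro: sum_nonneg)
  finally show ?case by simp
qed

lemma has_integral_const_cball:
  "((\<lambda>x::real^'n::finite. c) has_integral c * measure lborel (cball (0::real^'n) r)) (cball 0 r)"
proof -
  have "((\<lambda>x::real^'n. 1::real) has_integral measure lborel (cball (0::real^'n) r)) (cball 0 r)"
    by (rule has_integral_measure_lborel[OF borel_closed[OF closed_cball] emeasure_lborel_cball_finite])
  from has_integral_mult_right[OF this, of c] show ?thesis by simp
qed

lemma f_bound: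
  fixes t :: "real^'n::finite"
  assumes "t \<noteq> 0"
  shows "1 / veronese_norm d t \<le> sqrt (real CARD('n)) ^ d / norm t ^ d"
proof -
  have g: "veronese_norm d t > 0" using vn_pos[OF assms] .
  have n: "norm t ^ d > 0" using assms by simp
  have "norm t ^ d \<le> sqrt (real CARD('n)) ^ d * veronese_norm d t" by (rule vn_lower)
  then show ?thesis using g n by (simp add: field_simps)
qed

lemma f_nonneg: "0 \<le> 1 / veronese_norm d t"
  using vn_nonneg[of d t] by simp

lemma f_cont: "continuous_on (UNIV - {0}) (\<lambda>t::real^'n::finite. 1 / veronese_norm d t)"
  by (intro continuous_on_divide continuous_on_const continuous_on_subset[OF vn_cont])
     (auto dest: vn_pos[of _ d])

lemma cont_compact_int:
  fixes f :: "real^'n::finite \<Rightarrow> real"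
  assumes "compact K" "continuous_on K f"
  shows "f integrable_on K"
proof -
  have "integrable lborel (\<lambda>x. indicator K x *\<^sub>R f x)"
    by (rule borel_integrable_compact[OF assms])
  then have "(\<lambda>x. indicator K x *\<^sub>R f x) integrable_on UNIV" by (rule integrable_on_lborel)
  moreover have "(\<lambda>x. indicator K x *\<^sub>R f x) = (\<lambda>x. if x \<in> K then f x else 0)"
    by (auto simp: indicator_def)
  ultimately show ?thesis by (simp add: integrable_restrict_UNIV)
qed

lemma f_zero: "d \<ge> 1 \<Longrightarrow> 1 / veronese_norm d (0::real^'n::finite) = 0"
  by (simp add: vn_zero)

lemma f_int_unit:
  assumes "1 \<le> d" "d < CARD('n::finite)"
  shows "(\<lambda>t. 1 / veronese_norm d t) integrable_on cball (0::real^'n) 1"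
proof -
  let ?f = "\<lambda>t::real^'n. 1 / veronese_norm d t"
  let ?s = "sqrt (real CARD('n)) ^ d"
  define fk where "fk = (\<lambda>k (t::real^'n). if (1/2)^k \<le> norm t then ?f t else 0)"
  define Kk where "Kk = (\<lambda>k. cball (0::real^'n) 1 \<inter> {t. (1/2::real)^k \<le> norm t})"
  have int: "fk k integrable_on cball 0 1" for k
  proof -
    have "compact (Kk k)" unfolding Kk_def
      by (intro compact_Int_closed compact_cball closed_Collect_le continuous_intros)
    moreover have "continuous_on (Kk k) ?f"
    proof (rule continuous_on_subset[OF f_cont])
      have "\<not> (1/2::real)^k \<le> 0" by (simp add: not_le)
      then show "Kk k \<subseteq> UNIV - {0}" unfolding Kk_def by auto
    qed
    ultimately have "?f integrable_on Kk k" by (rule cont_compact_int)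
    then have "(\<lambda>x. if x \<in> Kk k then ?f x else 0) integrable_on UNIV"
      by (simp add: integrable_restrict_UNIV)
    moreover have "(\<lambda>x. if x \<in> Kk k then ?f x else 0) = (\<lambda>x. if x \<in> cball 0 1 then fk k x else 0)"
      by (auto simp: Kk_def fk_def)
    ultimately show ?thesis using integrable_restrict_UNIV[where f="fk k" and s="cball 0 1"] by simp
  qed
  have mono: "fk k x \<le> fk (Suc k) x" for k x
  proof -
    have h: "(1/2::real)^(Suc k) \<le> (1/2)^k" by (simp add: power_le_imp_le_exp)
    show ?thesis unfolding fk_def using f_nonneg[of d x] h by (smt (verit))
  qed
  have lim: "((\<lambda>k. fk k x) \<longlongrightarrow> ?f x) sequentially" for x
  proof (cases "x = 0")
    case True
    have "(1/2::real)^k > 0" for k by simp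
    then have "fk k x = ?f x" for k using True f_zero[OF assms(1)] by (simp add: fk_def not_le)
    then show ?thesis by simp
  next
    case False
    then obtain k0 where k0: "(1/2::real)^k0 < norm x"
      using real_arch_pow_inv[of "norm x" "1/2"] by auto
    have "eventually (\<lambda>k. fk k x = ?f x) sequentially"
      unfolding eventually_sequentially
    proof (intro exI allI impI)
      fix k assume "k0 \<le> k"
      then have h: "(1/2::real)^k \<le> (1/2)^k0" by (intro power_decreasing) auto
      show "fk k x = ?f x" unfolding fk_def using k0 h by (smt (verit))
    qed
    then show ?thesis by (rule tendsto_eventually)
  qed
  have bnd: "integral (cball 0 1) (fk k) \<le> ?s * (omega TYPE('n) * 2^d * 2)" for k
  proof -
    have st0: "((stepfun 1 k d :: real^'n \<Rightarrow> real) has_integral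
              (omega TYPE('n) * 2^d * 1^(CARD('n) - d) * (\<Sum>i\<le>k. ((1/2)^(CARD('n) - d))^i))) UNIV"
      by (rule stepfun_integral) (use assms in auto)
    have st: "((\<lambda>t::real^'n. ?s * stepfun 1 k d t) has_integral
              ?s * (omega TYPE('n) * 2^d * 1^(CARD('n) - d) * (\<Sum>i\<le>k. ((1/2)^(CARD('n) - d))^i))) UNIV"
      by (rule has_integral_mult_right[OF st0])
    have "integral (cball 0 1) (fk k) = integral UNIV (\<lambda>x. if x \<in> cball 0 1 then fk k x else 0)"
      by (rule integral_restrict_UNIV[symmetric])
    also have "\<dots> \<le> ?s * (omega TYPE('n) * 2^d * 1^(CARD('n) - d) * (\<Sum>i\<le>k. ((1/2)^(CARD('n) - d))^i))"
    proof (rule has_integral_le[OF integrable_integral st])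
      show "(\<lambda>x. if x \<in> cball 0 1 then fk k x else 0) integrable_on UNIV"
        using int[of k] by (simp only: integrable_restrict_UNIV)
      fix x :: "real^'n"
      show "(if x \<in> cball 0 1 then fk k x else 0) \<le> ?s * stepfun 1 k d x"
      proof (cases "x \<in> cball 0 1 \<and> (1/2)^k \<le> norm x")
        case True
        then have x0: "x \<noteq> 0" by (auto simp: power_le_zero_eq)
        have "(1::real) / 2^(Suc k) < (1/2)^k" by (simp add: power_divide field_simps)
        then have "1 / 2^(Suc k) < norm x" using True by linarith
        then have "1 / norm x ^ d \<le> stepfun 1 k d x"
          using True by (intro stepfun_ge) auto
        then have "?s * (1 / norm x ^ d) \<le> ?s * stepfun 1 k d x" by (intro mult_left_mono) auto
        moreover have "?f x \<le> ?s / norm x ^ d" by (rule f_bound[OF x0])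
        ultimately show ?thesis using True by (simp add: fk_def)
      next
        case False
        then show ?thesis using stepfun_nonneg[of 1 k d x] by (auto simp: fk_def)
      qed
    qed
    also have "\<dots> \<le> ?s * (omega TYPE('n) * 2^d * 2)"
    proof -
      have q: "(1/2::real)^(CARD('n) - d) \<le> 1/2"
        using power_decreasing[of 1 "CARD('n) - d" "1/2::real"] assms by auto
      have "(\<Sum>i\<le>k. ((1/2::real)^(CARD('n) - d))^i) \<le> 2" by (rule geom_le_2) (use q in auto)
      then show ?thesis using omega_pos[where 'n='n] by (intro mult_left_mono) auto
    qed
    finally show ?thesis .
  qed
  have "?f integrable_on cball 0 1 \<and> ((\<lambda>k. integral (cball 0 1) (fk k)) \<longlonglongrightarrow> integral (cball 0 1) ?f)"
  proof (rule monotone_convergence_increasing[OF int mono lim])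
    show "bounded (range (\<lambda>k. integral (cball 0 1) (fk k)))"
      unfolding bounded_iff
    proof (intro exI ballI)
      fix y assume "y \<in> range (\<lambda>k. integral (cball 0 1) (fk k))"
      then obtain k where k: "y = integral (cball 0 1) (fk k)" by auto
      have "0 \<le> y" unfolding k
        by (rule integral_nonneg[OF int]) (auto simp: fk_def f_nonneg vn_nonneg)
      then show "norm y \<le> ?s * (omega TYPE('n) * 2^d * 2)" using bnd[of k] k by simp
    qed
  qed
  then show ?thesis by blast
qed

lemma cball_sub_cbox: "cball (0::real^'n::finite) r \<subseteq> cbox (\<chi> i. -r) (\<chi> i. r)"
proof
  fix x :: "real^'n" assume "x \<in> cball 0 r"
  then have "norm x \<le> r" by simp
  then have "\<bar>x$i\<bar> \<le> r" for i using component_le_norm_cart[of x i] by linarith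
  then have "-r \<le> x$i \<and> x$i \<le> r" for i by (simp add: abs_le_iff) (metis minus_le_iff)
  then show "x \<in> cbox (\<chi> i. -r) (\<chi> i. r)" by (simp add: mem_box_cart)
qed

lemma f_scale:
  assumes "1 \<le> d" "d < CARD('n::finite)" "0 < Z"
  shows "((\<lambda>t::real^'n. 1 / veronese_norm d t) has_integral
          Z^(CARD('n) - d) * integral (cball (0::real^'n) 1) (\<lambda>t. 1 / veronese_norm d t)) (cball 0 Z)"
proof -
  let ?f = "\<lambda>t::real^'n. 1 / veronese_norm d t"
  let ?I = "integral (cball (0::real^'n) 1) ?f"
  let ?a = "(\<chi> i. -1) :: real^'n" and ?b = "(\<chi> i. 1) :: real^'n"
  have h1: "(?f has_integral ?I) (cball 0 1)"
    using f_int_unit[OF assms(1,2)] by (simp add: has_integral_integral)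
  have h2: "((\<lambda>x. if x \<in> cball 0 1 then ?f x else 0) has_integral ?I) (cbox ?a ?b)"
    using cball_sub_cbox[of 1, where 'n='n] h1 by (subst has_integral_restrict) auto
  have Zne: "1/Z \<noteq> 0" using assms(3) by simp
  note h3 = has_integral_affinity[OF h2 Zne, where c=0]
  have "0 \<in> cbox ?a ?b" by (simp add: mem_box_cart)
  then have ne: "cbox ?a ?b \<noteq> {}" by auto
  have set_eq: "(\<lambda>x. (1 / (1/Z)) *\<^sub>R x + - ((1 / (1/Z)) *\<^sub>R 0)) ` cbox ?a ?b = cbox (\<chi> i. -Z) (\<chi> i. Z)"
  proof -
    have "(\<lambda>x. (1 / (1/Z)) *\<^sub>R x + - ((1 / (1/Z)) *\<^sub>R 0)) ` cbox ?a ?b = (\<lambda>x. Z *\<^sub>R x) ` cbox ?a ?b"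
      by simp
    also have "\<dots> = cbox (Z *\<^sub>R ?a) (Z *\<^sub>R ?b)" using image_smult_cbox[of Z ?a ?b] ne assms(3) by simp
    also have "Z *\<^sub>R ?a = (\<chi> i. -Z)" by (simp add: vec_eq_iff)
    also have "Z *\<^sub>R ?b = (\<chi> i. Z)" by (simp add: vec_eq_iff)
    finally show ?thesis .
  qed
  have fn_eq: "(\<lambda>x. if (1/Z) *\<^sub>R x + 0 \<in> cball 0 1 then ?f ((1/Z) *\<^sub>R x + 0) else 0)
      = (\<lambda>x. if x \<in> cball 0 Z then Z^d * ?f x else 0)"
  proof
    fix x :: "real^'n"
    have m: "((1/Z) *\<^sub>R x \<in> cball 0 1) = (x \<in> cball 0 Z)"
      using assms(3) by (simp add: field_simps)
    have "?f ((1/Z) *\<^sub>R x) = Z^d * ?f x"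
      using assms(3) by (simp add: vn_homog power_one_over)
    then show "(if (1/Z) *\<^sub>R x + 0 \<in> cball 0 1 then ?f ((1/Z) *\<^sub>R x + 0) else 0)
      = (if x \<in> cball 0 Z then Z^d * ?f x else 0)" using m by simp
  qed
  have val: "(1 / \<bar>1/Z\<bar> ^ DIM(real^'n)) *\<^sub>R ?I = Z^CARD('n) * ?I"
    using assms(3) by (simp add: power_one_over)
  have h4: "((\<lambda>x. if x \<in> cball 0 Z then Z^d * ?f x else 0) has_integral Z^CARD('n) * ?I) (cbox (\<chi> i. -Z) (\<chi> i. Z))"
    using h3 unfolding set_eq fn_eq val .
  have h5: "((\<lambda>x. Z^d * ?f x) has_integral Z^CARD('n) * ?I) (cball 0 Z)"
    using h4 cball_sub_cbox[of Z, where 'n='n] by (subst (asm) has_integral_restrict) auto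
  note h6 = has_integral_mult_right[OF h5, of "1 / Z^d"]
  have e1: "(\<lambda>x. 1 / Z^d * (Z^d * ?f x)) = ?f" using assms(3) by auto
  have e2: "1 / Z^d * (Z^CARD('n) * ?I) = Z^(CARD('n) - d) * ?I"
    using assms by (simp add: power_diff)
  show ?thesis using h6 unfolding e1 e2 .
qed

lemma card_exps_pos: "0 < card (veronese_exps d :: ('n::finite \<Rightarrow> nat) set)"
proof -
  have "(\<lambda>j::'n. if j = undefined then d else 0) \<in> veronese_exps d"
    by (simp add: veronese_exps_def)
  then show ?thesis using finite_exps[of d, where 'n='n] card_gt_0_iff by blast
qed

lemma I_pos:
  assumes "1 \<le> d" "d < CARD('n::finite)"
  shows "0 < integral (cball (0::real^'n) 1) (\<lambda>t. 1 / veronese_norm d t)"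
proof -
  let ?f = "\<lambda>t::real^'n. 1 / veronese_norm d t"
  let ?I = "integral (cball (0::real^'n) 1) ?f"
  let ?E = "sqrt (real (card (veronese_exps d :: ('n \<Rightarrow> nat) set)))"
  have E: "0 < ?E" using card_exps_pos[of d, where 'n='n] by simp
  have h1: "(?f has_integral ?I) (cball 0 1)"
    using f_int_unit[OF assms(1,2)] by (simp add: has_integral_integral)
  have h2: "((\<lambda>t. if t = 0 then 1 / ?E else ?f t) has_integral ?I) (cball 0 1)"
    by (rule has_integral_spike[OF negligible_sing[of 0] _ h1]) auto
  have le: "1 / ?E \<le> (if t = 0 then 1 / ?E else ?f t)" if "t \<in> cball 0 1" for t
  proof (cases "t = 0")
    case False
    have "veronese_norm d t \<le> ?E * norm t ^ d" by (rule vn_upper)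
    also have "\<dots> \<le> ?E * 1" using that E by (intro mult_left_mono power_le_one) auto
    finally have "veronese_norm d t \<le> ?E" by simp
    moreover have "0 < veronese_norm d t" using vn_pos[OF False] .
    ultimately show ?thesis using False E by (simp add: frac_le)
  qed simp
  have "1 / ?E * measure lborel (cball (0::real^'n) 1) \<le> ?I"
    by (rule has_integral_le[OF has_integral_const_cball h2 le])
  moreover have "0 < 1 / ?E * measure lborel (cball (0::real^'n) 1)"
    using E content_cball_pos[of 1 "0::real^'n"] by simp
  ultimately show ?thesis by linarith
qed

lemma finite_int_points: "finite (int_points Z :: (real^'n::finite) set)"
proof -
  let ?M = "\<lceil>Z\<rceil>"
  have "int_points Z \<subseteq> (\<lambda>g. \<chi> i. real_of_int (g i)) ` (PiE (UNIV::'n set) (\<lambda>_. {-?M..?M}))"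
  proof
    fix z :: "real^'n" assume z: "z \<in> int_points Z"
    then have zi: "z$i \<in> \<int>" "norm z \<le> Z" for i by (auto simp: int_points_def)
    have eq: "z$i = real_of_int \<lfloor>z$i\<rfloor>" for i using zi(1)[of i] by (metis Ints_cases floor_of_int)
    have "\<bar>z$i\<bar> \<le> Z" for i using component_le_norm_cart[of z i] zi(2) by linarith
    have "\<lfloor>z$i\<rfloor> \<in> {-?M..?M}" for i
    proof -
      have a: "-Z \<le> z$i" "z$i \<le> Z" using \<open>\<bar>z$i\<bar> \<le> Z\<close> by auto
      have "real_of_int (-?M) \<le> -Z" using le_of_int_ceiling[of Z] by simp
      then have "real_of_int (-?M) \<le> z$i" using a by linarith
      then have 1: "-?M \<le> \<lfloor>z$i\<rfloor>" by (simp only: le_floor_iff)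
      have "\<lfloor>z$i\<rfloor> \<le> \<lfloor>Z\<rfloor>" using a by (intro floor_mono)
      then have 2: "\<lfloor>z$i\<rfloor> \<le> ?M" using floor_le_ceiling[of Z] by linarith
      show ?thesis using 1 2 by simp
    qed
    then have "(\<lambda>i. \<lfloor>z$i\<rfloor>) \<in> PiE UNIV (\<lambda>_. {-?M..?M})" by (simp add: PiE_UNIV_domain)
    moreover have "z = (\<chi> i. real_of_int ((\<lambda>i. \<lfloor>z$i\<rfloor>) i))" using eq by (simp add: vec_eq_iff)
    ultimately show "z \<in> (\<lambda>g. \<chi> i. real_of_int (g i)) ` (PiE UNIV (\<lambda>_. {-?M..?M}))" by (intro image_eqI[where x="\<lambda>i. \<lfloor>z$i\<rfloor>"]) simp_all
  qed
  moreover have "finite (PiE (UNIV::'n set) (\<lambda>_. {-?M..?M}))" by (intro finite_PiE) auto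
  ultimately show ?thesis by (meson finite_imageI finite_subset)
qed

lemma f_lip:
  fixes x y :: "real^'n::finite"
  assumes "x \<noteq> 0" "y \<noteq> 0" "1 \<le> a" "norm y \<le> a * norm x" "norm x \<le> a * norm y" "1 \<le> d"
  shows "\<bar>1 / veronese_norm d x - 1 / veronese_norm d y\<bar>
    \<le> real (card (veronese_exps d :: ('n \<Rightarrow> nat) set)) * d * a^(2*d) * real CARD('n)^d * norm (x - y) / norm x ^ (d+1)"
proof -
  let ?E = "real (card (veronese_exps d :: ('n \<Rightarrow> nat) set))"
  let ?N = "real CARD('n)"
  define X where "X = norm x"
  define \<delta> where "\<delta> = norm (x - y)"
  define G1 where "G1 = veronese_norm d x"
  define G2 where "G2 = veronese_norm d y"
  define D where "D = \<bar>G1 - G2\<bar>"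
  have X0: "0 < X" using assms(1) by (simp add: X_def)
  have G1: "0 < G1" using vn_pos[OF assms(1)] by (simp add: G1_def)
  have G2: "0 < G2" using vn_pos[OF assms(2)] by (simp add: G2_def)
  have s: "sqrt ?N ^ d * sqrt ?N ^ d = ?N ^ d"
    by (simp flip: power_mult_distrib)
  have l1: "X^d \<le> sqrt ?N ^ d * G1" unfolding X_def G1_def by (rule vn_lower)
  have "(X/a)^d \<le> norm y ^ d"
    using assms(3,5) X0 by (intro power_mono) (auto simp: X_def field_simps)
  also have "\<dots> \<le> sqrt ?N ^ d * G2" unfolding G2_def by (rule vn_lower)
  finally have l2: "(X/a)^d \<le> sqrt ?N ^ d * G2" .
  have lip: "D * (a * X) \<le> ?E * d * (a * X)^d * \<delta>"
    unfolding D_def G1_def G2_def \<delta>_def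
    by (rule vn_lip) (use assms(3,4) X0 in \<open>auto simp: X_def\<close>)
  have a0: "0 < a" using assms(3) by simp
  have D0: "0 \<le> D" by (simp add: D_def)
  have d0: "0 \<le> \<delta>" by (simp add: \<delta>_def)
  have "D * X * a \<le> ?E * d * a^d * X^d * \<delta>" using lip by (simp add: power_mult_distrib algebra_simps)
  also have "\<dots> \<le> ?E * d * a^d * X^d * \<delta> * a"
  proof -
    have "0 \<le> ?E * d * a^d * X^d * \<delta>" using a0 X0 d0 by (auto intro!: mult_nonneg_nonneg)
    from mult_left_mono[OF assms(3) this] show ?thesis by simp
  qed
  finally have DX: "D * X \<le> ?E * d * a^d * X^d * \<delta>" using a0 by simp
  have "X^d * (X/a)^d \<le> (sqrt ?N ^ d * G1) * (sqrt ?N ^ d * G2)"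
    using l1 l2 X0 a0 G1 by (intro mult_mono) auto
  moreover have "X^d * (X/a)^d = X^d * X^d / a^d" by (simp add: power_divide)
  moreover have "(sqrt ?N ^ d * G1) * (sqrt ?N ^ d * G2) = (sqrt ?N ^ d * sqrt ?N ^ d) * (G1 * G2)"
    by (simp add: algebra_simps)
  ultimately have "X^d * X^d / a^d \<le> ?N^d * (G1 * G2)" using s by simp
  then have GG: "X^d * X^d \<le> a^d * ?N^d * (G1 * G2)"
    using a0 by (simp add: pos_divide_le_eq mult.commute mult.left_commute)
  have "D * X^(d+1) = (D * X) * X^d" by (simp add: algebra_simps)
  also have "\<dots> \<le> (?E * d * a^d * X^d * \<delta>) * X^d" using DX X0 by (intro mult_right_mono) auto
  also have "\<dots> = ?E * d * a^d * \<delta> * (X^d * X^d)" by (simp add: algebra_simps)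
  also have "\<dots> \<le> ?E * d * a^d * \<delta> * (a^d * ?N^d * (G1 * G2))"
    using GG a0 d0 by (intro mult_left_mono) auto
  also have "\<dots> = ?E * d * (a^d * a^d) * ?N^d * \<delta> * (G1 * G2)"
    by (simp only: mult.assoc mult.commute mult.left_commute)
  also have "a^d * a^d = a^(2*d)" by (simp add: mult_2 power_add)
  finally have main: "D * X^(d+1) \<le> ?E * d * a^(2*d) * ?N^d * \<delta> * (G1 * G2)" .
  have "\<bar>1 / G1 - 1 / G2\<bar> = D / (G1 * G2)"
    using G1 G2 by (simp add: D_def field_simps abs_div)
  also have "\<dots> \<le> ?E * d * a^(2*d) * ?N^d * \<delta> / X^(d+1)"
    using main G1 G2 X0 by (simp add: field_simps)
  finally show ?thesis by (simp add: G1_def G2_def X_def \<delta>_def)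
qed

definition rnd :: "real^'n::finite \<Rightarrow> real^'n" where
  "rnd t = (\<chi> i. real_of_int \<lfloor>t$i + 1/2\<rfloor>)"

lemma rnd_int: "rnd t $ i \<in> \<int>"
  by (simp add: rnd_def)

lemma rnd_close: "\<bar>t$i - rnd t $ i\<bar> \<le> 1/2"
proof -
  have "real_of_int \<lfloor>t$i + 1/2\<rfloor> \<le> t$i + 1/2" by (rule of_int_floor_le)
  moreover have "t$i + 1/2 < real_of_int \<lfloor>t$i + 1/2\<rfloor> + 1" by (rule real_of_int_floor_add_one_gt)
  ultimately show ?thesis unfolding rnd_def vec_lambda_beta abs_le_iff by linarith
qed

lemma rnd_dist: "norm (t - rnd t) \<le> real CARD('n) / 2" for t :: "real^'n::finite"
proof -
  have "norm (t - rnd t) \<le> (\<Sum>i\<in>UNIV. \<bar>(t - rnd t)$i\<bar>)" by (rule norm_le_l1_cart)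
  also have "\<dots> \<le> (\<Sum>i\<in>(UNIV::'n set). 1/2)" by (intro sum_mono) (metis rnd_close vector_minus_component)
  finally show ?thesis by simp
qed

lemma int_vec_norm:
  fixes z :: "real^'n::finite"
  assumes "\<And>i. z$i \<in> \<int>" "z \<noteq> 0"
  shows "1 \<le> norm z"
proof -
  obtain i where "z$i \<noteq> 0" using assms(2) by (metis vec_eq_iff zero_index)
  moreover from assms(1)[of i] obtain m where "z$i = of_int m" by (auto elim: Ints_cases)
  ultimately have "1 \<le> \<bar>z$i\<bar>" by auto
  also have "\<dots> \<le> norm z" by (rule component_le_norm_cart)
  finally show ?thesis .
qed

lemma rnd_le2: "norm (rnd t) \<le> 2 * norm t"
proof -
  have "norm (rnd t $ i) \<le> norm ((2 *\<^sub>R t) $ i)" for i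
  proof -
    have c: "\<bar>t$i - rnd t $ i\<bar> \<le> 1/2" by (rule rnd_close)
    show ?thesis
    proof (cases "rnd t $ i = 0")
      case True then show ?thesis by simp
    next
      case False
      from rnd_int[of t i] obtain m where m: "rnd t $ i = of_int m" by (auto elim: Ints_cases)
      with False have r1: "1 \<le> \<bar>rnd t $ i\<bar>" by auto
      have "\<bar>rnd t $ i\<bar> \<le> \<bar>t$i\<bar> + \<bar>t$i - rnd t $ i\<bar>" by linarith
      then have "\<bar>rnd t $ i\<bar> \<le> 2 * \<bar>t$i\<bar>" using c r1 by linarith
      then show ?thesis by (simp add: abs_mult)
    qed
  qed
  then have "norm (rnd t) \<le> norm (2 *\<^sub>R t)" by (rule norm_le_componentwise_cart)
  then show ?thesis by simp
qed

lemma rnd_eq_iff: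
  fixes z :: "real^'n::finite"
  assumes "\<And>i. z$i \<in> \<int>"
  shows "rnd t = z \<longleftrightarrow> (\<forall>i. z$i - 1/2 \<le> t$i \<and> t$i < z$i + 1/2)"
proof -
  have "(rnd t $ i = z $ i) \<longleftrightarrow> (z$i - 1/2 \<le> t$i \<and> t$i < z$i + 1/2)" for i
  proof -
    from assms[of i] obtain m where m: "z$i = of_int m" by (auto elim: Ints_cases)
    have "(rnd t $ i = z $ i) \<longleftrightarrow> \<lfloor>t$i + 1/2\<rfloor> = m" by (simp add: rnd_def m)
    also have "\<dots> \<longleftrightarrow> of_int m \<le> t$i + 1/2 \<and> t$i + 1/2 < of_int m + 1" by (rule floor_eq_iff)
    finally show ?thesis by (simp add: m) linarith
  qed
  then show ?thesis by (simp add: vec_eq_iff)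
qed

lemma cube_integral:
  fixes z :: "real^'n::finite" and c :: real
  assumes "\<And>i. z$i \<in> \<int>"
  shows "((\<lambda>t. if rnd t = z then c else 0) has_integral c) UNIV"
proof -
  let ?a = "(\<chi> i. z$i - 1/2) :: real^'n" and ?b = "(\<chi> i. z$i + 1/2) :: real^'n"
  have ne: "cbox ?a ?b \<noteq> {}" using mem_box_cart(2)[of z ?a ?b] by auto
  have "measure lborel (cbox ?a ?b) = 1" using content_cbox_cart[OF ne] by simp
  then have "((\<lambda>t. c) has_integral c) (cbox ?a ?b)" using has_integral_const[of c ?a ?b] by simp
  then have h: "((\<lambda>t. if t \<in> cbox ?a ?b then c else 0) has_integral c) UNIV"
    by (rule has_integral_restrict_UNIV[where f="\<lambda>t. c", THEN iffD2])
  show ?thesis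
  proof (rule has_integral_spike[OF negligible_frontier_interval _ h])
    fix t assume t: "t \<in> UNIV - (cbox ?a ?b - box ?a ?b)"
    show "(if rnd t = z then c else 0) = (if t \<in> cbox ?a ?b then c else 0)"
    proof (cases "t \<in> box ?a ?b")
      case True
      then have "rnd t = z" unfolding rnd_eq_iff[OF assms] by (auto simp: mem_box_cart less_imp_le)
      then show ?thesis using True box_subset_cbox by auto
    next
      case False
      with t have "t \<notin> cbox ?a ?b" by auto
      moreover have "rnd t \<noteq> z" using calculation
        unfolding rnd_eq_iff[OF assms] by (auto simp: mem_box_cart) (meson less_imp_le)
      ultimately show ?thesis by auto
    qed
  qed
qed

lemma sum_as_integral:
  fixes S :: "(real^'n::finite) set" and g :: "real^'n \<Rightarrow> real"
  assumes "finite S" "\<And>z i. z \<in> S \<Longrightarrow> z$i \<in> \<int>"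
  shows "((\<lambda>t. if rnd t \<in> S then g (rnd t) else 0) has_integral (\<Sum>z\<in>S. g z)) UNIV"
proof -
  have "((\<lambda>t. \<Sum>z\<in>S. if rnd t = z then g z else 0) has_integral (\<Sum>z\<in>S. g z)) UNIV"
    by (intro has_integral_sum assms(1) cube_integral assms(2)) auto
  moreover have "(\<lambda>t. \<Sum>z\<in>S. if rnd t = z then g z else 0) = (\<lambda>t. if rnd t \<in> S then g (rnd t) else 0)"
    using assms(1) by (auto simp: sum.delta')
  ultimately show ?thesis by simp
qed

definition C1c :: "nat \<Rightarrow> 'n::finite itself \<Rightarrow> real" where
  "C1c d _ = real (card (veronese_exps d :: ('n \<Rightarrow> nat) set)) * d * (1 + real CARD('n))^(2*d)
     * real CARD('n)^d * real CARD('n)"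

definition C2c :: "nat \<Rightarrow> 'n::finite itself \<Rightarrow> real" where
  "C2c d _ = sqrt (real CARD('n))^d * (1 + real CARD('n))^d"

definition Gf :: "nat \<Rightarrow> real \<Rightarrow> nat \<Rightarrow> real^'n::finite \<Rightarrow> real" where
  "Gf d Z J t = C1c d TYPE('n) * stepfun (2^J) (Suc J) (Suc d) t
     + C2c d TYPE('n) / Z^d * ((if norm t \<le> Z + real CARD('n) then 1 else 0)
                            - (if norm t \<le> max (Z - real CARD('n)) 0 then 1 else 0))
     + (if norm t \<le> real CARD('n) then 1 / veronese_norm d t else 0)"

lemma C1c_nonneg: "0 \<le> C1c d TYPE('n::finite)"
  by (simp add: C1c_def)

lemma C2c_nonneg: "0 \<le> C2c d TYPE('n::finite)"
  by (simp add: C2c_def)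

lemma f_le_shell:
  fixes x :: "real^'n::finite"
  assumes "0 < Z" "1 \<le> a" "Z / a \<le> norm x" "x \<noteq> 0"
  shows "1 / veronese_norm d x \<le> sqrt (real CARD('n))^d * a^d / Z^d"
proof -
  have a0: "0 < a" using assms(2) by simp
  have "1 / veronese_norm d x \<le> sqrt (real CARD('n))^d / norm x ^ d" by (rule f_bound[OF assms(4)])
  also have "\<dots> \<le> sqrt (real CARD('n))^d / (Z/a)^d"
    using assms a0 by (intro divide_left_mono power_mono mult_pos_pos) auto
  also have "\<dots> = sqrt (real CARD('n))^d * a^d / Z^d" by (simp add: power_divide)
  finally show ?thesis .
qed

lemma Gf_terms_nonneg:
  fixes t :: "real^'n::finite"
  assumes "0 < Z"
  shows "0 \<le> C1c d TYPE('n) * stepfun (2^J) (Suc J) (Suc d) t"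
    and "0 \<le> C2c d TYPE('n) / Z^d * ((if norm t \<le> Z + real CARD('n) then 1 else 0)
                            - (if norm t \<le> max (Z - real CARD('n)) 0 then 1 else 0))"
    and "0 \<le> (if norm t \<le> real CARD('n) then 1 / veronese_norm d t else 0)"
proof -
  show "0 \<le> C1c d TYPE('n) * stepfun (2^J) (Suc J) (Suc d) t"
    by (intro mult_nonneg_nonneg C1c_nonneg stepfun_nonneg) simp
  have "((if norm t \<le> Z + real CARD('n) then 1 else 0)
                            - (if norm t \<le> max (Z - real CARD('n)) 0 then 1 else 0)) \<ge> (0::real)"
    using assms by auto
  then show "0 \<le> C2c d TYPE('n) / Z^d * ((if norm t \<le> Z + real CARD('n) then 1 else 0)
                            - (if norm t \<le> max (Z - real CARD('n)) 0 then 1 else 0))"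
    using assms C2c_nonneg by (intro mult_nonneg_nonneg divide_nonneg_pos) auto
  show "0 \<le> (if norm t \<le> real CARD('n) then 1 / veronese_norm d t else 0)"
    using f_nonneg by auto
qed

lemma pointwise:
  fixes t :: "real^'n::finite"
  assumes d: "1 \<le> d" and Z: "1 \<le> Z" and J: "Z \<le> 2^J"
  defines "F \<equiv> (\<lambda>t::real^'n. if rnd t \<in> int_points Z then 1 / veronese_norm d (rnd t) else 0)"
  shows "\<bar>F t - (if t \<in> cball 0 Z then 1 / veronese_norm d t else 0)\<bar> \<le> Gf d Z J t"
proof -
  let ?f = "\<lambda>t::real^'n. 1 / veronese_norm d t"
  let ?N = "real CARD('n)"
  let ?a = "1 + ?N"
  let ?r = "rnd t"
  let ?T1 = "C1c d TYPE('n) * stepfun (2^J) (Suc J) (Suc d) t"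
  let ?T2 = "C2c d TYPE('n) / Z^d * ((if norm t \<le> Z + ?N then 1 else 0)
                            - (if norm t \<le> max (Z - ?N) 0 then 1 else 0))"
  let ?T3 = "(if norm t \<le> ?N then 1 / veronese_norm d t else 0)"
  have Z0: "0 < Z" using Z by simp
  have N1: "1 \<le> ?N" by simp
  have Gd: "Gf d Z J t = ?T1 + ?T2 + ?T3" by (simp add: Gf_def)
  have nn: "0 \<le> ?T1" "0 \<le> ?T2" "0 \<le> ?T3" by (rule Gf_terms_nonneg[OF Z0])+
  have R1: "norm (t - ?r) \<le> ?N / 2" by (rule rnd_dist)
  have R2: "norm ?r \<le> 2 * norm t" by (rule rnd_le2)
  have R3: "norm t \<le> norm ?r + ?N / 2" using norm_triangle_ineq[of ?r "t - ?r"] R1 by simp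
  have R4: "\<And>i. ?r $ i \<in> \<int>" by (rule rnd_int)
  have R5: "norm ?r \<le> norm t + ?N / 2" using norm_triangle_ineq4[of t "t - ?r"] R1 by simp
  have S_iff: "?r \<in> int_points Z \<longleftrightarrow> ?r \<noteq> 0 \<and> norm ?r \<le> Z"
    using R4 by (auto simp: int_points_def)
  have T2val: "?T2 = C2c d TYPE('n) / Z^d" if "max (Z - ?N) 0 < norm t" "norm t \<le> Z + ?N"
  proof -
    have "\<not> (norm t \<le> max (Z - ?N) 0)" using that(1) by linarith
    then show ?thesis using that(2) by simp
  qed
  have shell: "?f x \<le> C2c d TYPE('n) / Z^d" if "Z / ?a \<le> norm x" "x \<noteq> 0" for x
  proof -
    have "?f x \<le> sqrt ?N^d * ?a^d / Z^d" by (rule f_le_shell[OF Z0 _ that(1) that(2)]) simp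
    then show ?thesis by (simp add: C2c_def)
  qed
  show ?thesis
  proof (cases "?r \<in> int_points Z")
    case True
    then have r0: "?r \<noteq> 0" and rZ: "norm ?r \<le> Z" using S_iff by auto
    have r1: "1 \<le> norm ?r" by (rule int_vec_norm[OF R4 r0])
    have "?N / 2 * 1 \<le> ?N / 2 * norm ?r" by (intro mult_left_mono r1) simp
    then have "norm t \<le> norm ?r + ?N / 2 * norm ?r" using R3 by linarith
    also have "\<dots> \<le> ?a * norm ?r" using r1 by (simp add: algebra_simps)
    finally have c2: "norm t \<le> ?a * norm ?r" .
    show ?thesis
    proof (cases "t \<in> cball 0 Z")
      case True
      have t2: "1/2 \<le> norm t" using R2 r1 by linarith
      then have t0: "t \<noteq> 0" by auto
      have "2 * norm t \<le> ?a * norm t" using N1 by (intro mult_right_mono) auto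
      then have c1: "norm ?r \<le> ?a * norm t" using R2 by linarith
      have "\<bar>?f t - ?f ?r\<bar> \<le> real (card (veronese_exps d :: ('n \<Rightarrow> nat) set)) * d * ?a^(2*d) * ?N^d * norm (t - ?r) / norm t ^ (d+1)"
        by (rule f_lip[OF t0 r0 _ c1 c2 d]) simp
      also have "\<dots> \<le> real (card (veronese_exps d :: ('n \<Rightarrow> nat) set)) * d * ?a^(2*d) * ?N^d * ?N / norm t ^ (d+1)"
        using R1 t0 by (intro divide_right_mono mult_left_mono) auto
      also have "\<dots> = C1c d TYPE('n) * (1 / norm t ^ Suc d)" by (simp add: C1c_def)
      also have "\<dots> \<le> C1c d TYPE('n) * stepfun (2^J) (Suc J) (Suc d) t"
      proof (intro mult_left_mono C1c_nonneg stepfun_ge)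
        have "(2::real)^J / 2^(Suc (Suc J)) = 1/4" by (simp add: field_simps)
        then show "(2::real)^J / 2^(Suc (Suc J)) < norm t" using t2 by simp
        show "norm t \<le> 2^J" using True J by simp
      qed simp
      finally have "\<bar>?f t - ?f ?r\<bar> \<le> ?T1" .
      moreover have "\<bar>F t - (if t \<in> cball 0 Z then ?f t else 0)\<bar> = \<bar>?f t - ?f ?r\<bar>"
        using \<open>?r \<in> int_points Z\<close> True by (simp add: F_def abs_minus_commute)
      ultimately show ?thesis using Gd nn by linarith
    next
      case False
      then have tZ: "Z < norm t" by simp
      have "Z / ?a \<le> norm t / ?a" using tZ by (intro divide_right_mono) auto
      also have "norm t / ?a \<le> norm ?r"
        using c2 by (simp add: divide_le_eq mult.commute)
      finally have "?f ?r \<le> C2c d TYPE('n) / Z^d" by (intro shell r0)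
      moreover have "?T2 = C2c d TYPE('n) / Z^d"
        using R3 rZ tZ Z0 by (intro T2val) auto
      moreover have "\<bar>F t - (if t \<in> cball 0 Z then ?f t else 0)\<bar> = ?f ?r"
        using \<open>?r \<in> int_points Z\<close> False f_nonneg[of d ?r] by (simp add: F_def)
      ultimately show ?thesis using Gd nn by linarith
    qed
  next
    case False
    show ?thesis
    proof (cases "t \<in> cball 0 Z")
      case True
      have eq: "\<bar>F t - (if t \<in> cball 0 Z then ?f t else 0)\<bar> = ?f t"
        using False True f_nonneg[of d t] by (simp add: F_def)
      show ?thesis
      proof (cases "?r = 0")
        case True
        then have "norm t \<le> ?N" using R3 by simp
        then have "?T3 = ?f t" by simp
        then show ?thesis using eq Gd nn by linarith
      next
        case r0: False
        with False S_iff have rZ: "Z < norm ?r" by auto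
        have tpos: "0 < norm t" using R2 rZ Z0 by linarith
        have "Z / ?a \<le> Z / 2" using Z0 by (intro divide_left_mono) auto
        also have "\<dots> \<le> norm t" using R2 rZ by linarith
        finally have "?f t \<le> C2c d TYPE('n) / Z^d" using tpos by (intro shell) auto
        moreover have "?T2 = C2c d TYPE('n) / Z^d"
        proof (rule T2val)
          have "Z - ?N < norm t" using R5 rZ N1 by linarith
          then show "max (Z - ?N) 0 < norm t" using tpos by simp
          show "norm t \<le> Z + ?N" using True by simp
        qed
        ultimately show ?thesis using eq Gd nn by linarith
      qed
    next
      case False
      then have "\<bar>F t - (if t \<in> cball 0 Z then ?f t else 0)\<bar> = 0"
        using \<open>?r \<notin> int_points Z\<close> by (simp add: F_def)
      then show ?thesis using Gd nn by linarith
    qed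
  qed
qed

lemma Gf_integral:
  assumes d: "1 \<le> d" "d < CARD('n::finite)" and Z: "1 \<le> Z"
  shows "((Gf d Z J :: real^'n \<Rightarrow> real) has_integral
     C1c d TYPE('n) * (omega TYPE('n) * 2^(Suc d) * (2^J)^(CARD('n) - Suc d) * (\<Sum>i\<le>Suc J. ((1/2)^(CARD('n) - Suc d))^i))
   + C2c d TYPE('n) / Z^d * (1 * measure lborel (cball (0::real^'n) (Z + real CARD('n))) - 1 * measure lborel (cball (0::real^'n) (max (Z - real CARD('n)) 0)))
   + real CARD('n)^(CARD('n) - d) * integral (cball (0::real^'n) 1) (\<lambda>t. 1 / veronese_norm d t)) UNIV"
proof -
  let ?N = "real CARD('n)"
  have P1: "((\<lambda>t::real^'n. C1c d TYPE('n) * stepfun (2^J) (Suc J) (Suc d) t) has_integral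
     C1c d TYPE('n) * (omega TYPE('n) * 2^(Suc d) * (2^J)^(CARD('n) - Suc d) * (\<Sum>i\<le>Suc J. ((1/2)^(CARD('n) - Suc d))^i))) UNIV"
    by (intro has_integral_mult_right stepfun_integral) (use d in auto)
  have P2: "((\<lambda>t::real^'n. C2c d TYPE('n) / Z^d * ((if norm t \<le> Z + ?N then 1 else 0)
                            - (if norm t \<le> max (Z - ?N) 0 then 1 else 0))) has_integral
     C2c d TYPE('n) / Z^d * (1 * measure lborel (cball (0::real^'n) (Z + ?N)) - 1 * measure lborel (cball (0::real^'n) (max (Z - ?N) 0)))) UNIV"
    by (intro has_integral_mult_right has_integral_diff has_integral_ind_cball)
  have "((\<lambda>t::real^'n. 1 / veronese_norm d t) has_integral ?N^(CARD('n) - d) * integral (cball (0::real^'n) 1) (\<lambda>t. 1 / veronese_norm d t)) (cball 0 ?N)"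
    by (rule f_scale) (use d in auto)
  then have P3: "((\<lambda>t::real^'n. if norm t \<le> ?N then 1 / veronese_norm d t else 0) has_integral
      ?N^(CARD('n) - d) * integral (cball (0::real^'n) 1) (\<lambda>t. 1 / veronese_norm d t)) UNIV"
    using has_integral_restrict_UNIV[where f="\<lambda>t::real^'n. 1 / veronese_norm d t" and s="cball 0 ?N"]
    by simp
  note P = has_integral_add[OF has_integral_add[OF P1 P2] P3]
  show ?thesis unfolding Gf_def by (rule P)
qed

lemma diff_bound:
  assumes d: "1 \<le> d" "d < CARD('n::finite)" and Z: "1 \<le> Z" and J: "Z \<le> 2^J"
  shows "\<bar>(\<Sum>z\<in>(int_points Z :: (real^'n) set). 1 / veronese_norm d z)
          - Z^(CARD('n) - d) * integral (cball (0::real^'n) 1) (\<lambda>t. 1 / veronese_norm d t)\<bar>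
     \<le> integral UNIV (Gf d Z J :: real^'n \<Rightarrow> real)"
proof -
  let ?f = "\<lambda>t::real^'n. 1 / veronese_norm d t"
  let ?I = "integral (cball (0::real^'n) 1) ?f"
  let ?S = "int_points Z :: (real^'n) set"
  define F where "F = (\<lambda>t::real^'n. if rnd t \<in> int_points Z then 1 / veronese_norm d (rnd t) else 0)"
  have h1: "(F has_integral (\<Sum>z\<in>?S. ?f z)) UNIV"
    unfolding F_def by (rule sum_as_integral[OF finite_int_points]) (auto simp: int_points_def)
  have "(?f has_integral Z^(CARD('n) - d) * ?I) (cball 0 Z)"
    by (rule f_scale) (use d Z in auto)
  then have h2: "((\<lambda>t. if t \<in> cball 0 Z then ?f t else 0) has_integral Z^(CARD('n) - d) * ?I) UNIV"
    by (simp only: has_integral_restrict_UNIV)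
  have h3: "((\<lambda>t. F t - (if t \<in> cball 0 Z then ?f t else 0)) has_integral
            (\<Sum>z\<in>?S. ?f z) - Z^(CARD('n) - d) * ?I) UNIV"
    by (rule has_integral_diff[OF h1 h2])
  have Gi: "(Gf d Z J :: real^'n \<Rightarrow> real) integrable_on UNIV"
    using Gf_integral[OF d Z] by blast
  have "norm (integral UNIV (\<lambda>t. F t - (if t \<in> cball 0 Z then ?f t else 0))) \<le> integral UNIV (Gf d Z J :: real^'n \<Rightarrow> real)"
  proof (rule integral_norm_bound_integral)
    show "(\<lambda>t. F t - (if t \<in> cball 0 Z then ?f t else 0)) integrable_on UNIV" using h3 by blast
    show "(Gf d Z J :: real^'n \<Rightarrow> real) integrable_on UNIV" by (rule Gi)
    fix t :: "real^'n"
    show "norm (F t - (if t \<in> cball 0 Z then ?f t else 0)) \<le> Gf d Z J t"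
      using pointwise[OF d(1) Z J, of t] by (simp add: F_def)
  qed
  moreover have "integral UNIV (\<lambda>t. F t - (if t \<in> cball 0 Z then ?f t else 0)) = (\<Sum>z\<in>?S. ?f z) - Z^(CARD('n) - d) * ?I"
    using h3 by (rule integral_unique)
  ultimately show ?thesis by simp
qed

lemma pow_diff_le:
  fixes x y :: real
  assumes "0 \<le> y" "y \<le> x" "0 < x" "1 \<le> n"
  shows "x^n - y^n \<le> n * x^(n-1) * (x - y)"
proof -
  have "\<bar>x^n - y^n\<bar> * x \<le> n * x^n * \<bar>x - y\<bar>" by (rule power_diff_M) (use assms in auto)
  moreover have "x^n = x * x^(n-1)" using assms(4) by (metis Suc_diff_le diff_Suc_1 power_Suc)
  moreover have "y^n \<le> x^n" using assms by (intro power_mono) auto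
  ultimately have "(x^n - y^n) * x \<le> (n * x^(n-1) * (x - y)) * x" using assms by (simp add: algebra_simps)
  then show ?thesis using assms(3) by simp
qed

lemma J_facts:
  fixes Z :: real
  assumes "2 \<le> Z"
  defines "J \<equiv> nat \<lceil>log 2 Z\<rceil>"
  shows "Z \<le> 2^J" "2^J \<le> 2 * Z" "real J \<le> log 2 Z + 1"
proof -
  have L1: "1 \<le> log 2 Z" using assms by simp
  have rJ: "real J = \<lceil>log 2 Z\<rceil>" using L1 unfolding J_def by simp
  have "(2::real)^J = 2 powr (real J)" by (simp add: powr_realpow)
  note e = this
  have "Z = 2 powr (log 2 Z)" using assms by simp
  also have "\<dots> \<le> 2 powr (real J)" using rJ by (intro powr_mono) auto
  finally show "Z \<le> 2^J" using e by simp
  have "2 powr (real J) \<le> 2 powr (log 2 Z + 1)" using rJ by (intro powr_mono) linarith+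
  also have "\<dots> = 2 * Z" using assms by (simp add: powr_add)
  finally show "2^J \<le> 2 * Z" using e by simp
  show "real J \<le> log 2 Z + 1" using rJ by linarith
qed

lemma first_term_bound:
  fixes Z A :: real
  assumes "2 \<le> Z" "0 \<le> A"
  defines "J \<equiv> nat \<lceil>log 2 Z\<rceil>"
  shows "A * (2^J)^k * (\<Sum>i\<le>Suc J. ((1/2::real)^k)^i)
     \<le> (if k = 0 then 4 * A * (ln Z / ln 2) else 2^(k+1) * A * Z^k)"
proof (cases "k = 0")
  case True
  have "(\<Sum>i\<le>Suc J. ((1/2::real)^k)^i) \<le> real (Suc (Suc J))" using True by simp
  also have "\<dots> \<le> log 2 Z + 3" using J_facts(3)[OF assms(1)] unfolding J_def by simp
  also have "\<dots> \<le> 4 * (ln Z / ln 2)"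
  proof -
    have "1 \<le> log 2 Z" using assms by simp
    moreover have "log 2 Z = ln Z / ln 2" by (simp add: log_def)
    ultimately show ?thesis by linarith
  qed
  finally have s: "(\<Sum>i\<le>Suc J. ((1/2::real)^k)^i) \<le> 4 * (ln Z / ln 2)" .
  have "A * (\<Sum>i\<le>Suc J. ((1/2::real)^k)^i) \<le> A * (4 * (ln Z / ln 2))"
    using s assms(2) by (rule mult_left_mono)
  then show ?thesis using True by (simp add: algebra_simps)
next
  case False
  have q: "(1/2::real)^k \<le> 1/2" using power_decreasing[of 1 k "1/2::real"] False by auto
  have s: "(\<Sum>i\<le>Suc J. ((1/2::real)^k)^i) \<le> 2" by (rule geom_le_2) (use q in auto)
  have "(2::real)^J \<le> 2 * Z" using J_facts(2)[OF assms(1)] unfolding J_def .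
  then have p: "((2::real)^J)^k \<le> (2 * Z)^k" by (intro power_mono) auto
  have "A * (2^J)^k * (\<Sum>i\<le>Suc J. ((1/2::real)^k)^i) \<le> A * (2 * Z)^k * 2"
  proof (rule mult_mono)
    show "A * (2 ^ J) ^ k \<le> A * (2 * Z) ^ k" using p assms(2) by (rule mult_left_mono)
    show "0 \<le> A * (2 * Z) ^ k" using assms by simp
    show "0 \<le> (\<Sum>i\<le>Suc J. ((1/2::real)^k)^i)" by (intro sum_nonneg) simp
  qed (rule s)
  also have "\<dots> = 2^(k+1) * A * Z^k" by (simp add: power_mult_distrib)
  finally show ?thesis using False by simp
qed

lemma V_bound:
  assumes d: "1 \<le> d" "d < CARD('n::finite)" and Z: "2 \<le> Z"
  defines "J \<equiv> nat \<lceil>log 2 Z\<rceil>" and "k \<equiv> CARD('n) - Suc d"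
    and "A \<equiv> C1c d TYPE('n) * omega TYPE('n) * 2^(Suc d)"
    and "B \<equiv> C2c d TYPE('n) * omega TYPE('n) * (2 * real CARD('n)^2 * (1 + real CARD('n))^(CARD('n) - 1))"
    and "T \<equiv> real CARD('n)^(CARD('n) - d) * integral (cball (0::real^'n) 1) (\<lambda>t. 1 / veronese_norm d t)"
  shows "integral UNIV (Gf d Z J :: real^'n \<Rightarrow> real)
     \<le> (if k = 0 then 4 * A * (ln Z / ln 2) else 2^(k+1) * A * Z^k) + B * Z^k + T"
proof -
  let ?N = "real CARD('n)"
  let ?m = "max (Z - ?N) 0"
  let ?\<omega> = "omega TYPE('n)"
  have Z1: "1 \<le> Z" using Z by simp
  have gi: "integral UNIV (Gf d Z J :: real^'n \<Rightarrow> real) =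
     C1c d TYPE('n) * (?\<omega> * 2^(Suc d) * (2^J)^k * (\<Sum>i\<le>Suc J. ((1/2)^k)^i))
   + C2c d TYPE('n) / Z^d * (1 * measure lborel (cball (0::real^'n) (Z + ?N)) - 1 * measure lborel (cball (0::real^'n) ?m))
   + T"
    unfolding k_def T_def by (rule integral_unique[OF Gf_integral[OF d Z1]])
  have A0: "0 \<le> A" unfolding A_def using C1c_nonneg[of d, where 'n='n] omega_pos[where 'n='n] by simp
  have t1: "C1c d TYPE('n) * (?\<omega> * 2^(Suc d) * (2^J)^k * (\<Sum>i\<le>Suc J. ((1/2)^k)^i))
      = A * (2^J)^k * (\<Sum>i\<le>Suc J. ((1/2::real)^k)^i)" by (simp add: A_def)
  have b1: "A * (2^J)^k * (\<Sum>i\<le>Suc J. ((1/2::real)^k)^i) \<le> (if k = 0 then 4 * A * (ln Z / ln 2) else 2^(k+1) * A * Z^k)"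
    unfolding J_def by (rule first_term_bound[OF Z A0])
  have t2: "1 * measure lborel (cball (0::real^'n) (Z + ?N)) - 1 * measure lborel (cball (0::real^'n) ?m)
      = ?\<omega> * ((Z + ?N)^CARD('n) - ?m^CARD('n))"
    using Z by (simp add: content_cball0 algebra_simps)
  have "(Z + ?N)^CARD('n) - ?m^CARD('n) \<le> CARD('n) * (Z + ?N)^(CARD('n) - 1) * ((Z + ?N) - ?m)"
    by (rule pow_diff_le) (use Z in auto)
  also have "\<dots> \<le> ?N * ((1 + ?N)^(CARD('n) - 1) * Z^(CARD('n) - 1)) * (2 * ?N)"
  proof (intro mult_mono)
    have "Z + ?N \<le> (1 + ?N) * Z" using Z1 by (simp add: algebra_simps)
    then have "(Z + ?N)^(CARD('n) - 1) \<le> ((1 + ?N) * Z)^(CARD('n) - 1)" using Z by (intro power_mono) auto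
    then show "(Z + ?N)^(CARD('n) - 1) \<le> (1 + ?N)^(CARD('n) - 1) * Z^(CARD('n) - 1)"
      by (simp add: power_mult_distrib)
    show "(Z + ?N) - ?m \<le> 2 * ?N" by simp
  qed (use Z in auto)
  also have "\<dots> = (2 * ?N^2 * (1 + ?N)^(CARD('n) - 1)) * Z^(CARD('n) - 1)"
    by (simp add: power2_eq_square algebra_simps)
  finally have sh: "(Z + ?N)^CARD('n) - ?m^CARD('n) \<le> (2 * ?N^2 * (1 + ?N)^(CARD('n) - 1)) * Z^(CARD('n) - 1)" .
  have Zp: "Z^(CARD('n) - 1) = Z^d * Z^k" unfolding k_def using d by (simp flip: power_add)
  have "C2c d TYPE('n) / Z^d * (?\<omega> * ((Z + ?N)^CARD('n) - ?m^CARD('n)))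
      \<le> C2c d TYPE('n) / Z^d * (?\<omega> * ((2 * ?N^2 * (1 + ?N)^(CARD('n) - 1)) * Z^(CARD('n) - 1)))"
    using sh omega_pos[where 'n='n] C2c_nonneg[of d, where 'n='n] Z
    by (intro mult_left_mono) auto
  also have "\<dots> = B * Z^k" unfolding Zp B_def using Z by (simp add: field_simps)
  finally have b2: "C2c d TYPE('n) / Z^d * (1 * measure lborel (cball (0::real^'n) (Z + ?N)) - 1 * measure lborel (cball (0::real^'n) ?m)) \<le> B * Z^k"
    unfolding t2 .
  show ?thesis unfolding gi t1 using b1 b2 by linarith
qed

theorem mainTheorem11:
  fixes d :: nat
  assumes "d \<ge> 2" and "CARD('n::finite) \<ge> d + 1"
  defines "I \<equiv> integral (cball (0::real^'n) 1) (\<lambda>t. 1 / veronese_norm d t)"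
  shows "(\<exists>C. \<forall>Z::real. Z \<ge> 2 \<longrightarrow>
            \<bar>(\<Sum>z\<in>(int_points Z :: (real^'n) set). 1 / veronese_norm d z) - I * Z ^ (CARD('n) - d)\<bar>
              \<le> C * I * Z ^ (CARD('n) - d) * (ln Z / Z))
       \<and> (CARD('n) > d + 1 \<longrightarrow>
          (\<exists>C. \<forall>Z::real. Z \<ge> 2 \<longrightarrow>
            \<bar>(\<Sum>z\<in>(int_points Z :: (real^'n) set). 1 / veronese_norm d z) - I * Z ^ (CARD('n) - d)\<bar>
              \<le> C * I * Z ^ (CARD('n) - d) * (1 / Z)))"
proof -
  have d1: "1 \<le> d" and dN: "d < CARD('n)" using assms by auto
  define k where "k = CARD('n) - Suc d"
  define A where "A = C1c d TYPE('n) * omega TYPE('n) * 2^(Suc d)"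
  define B where "B = C2c d TYPE('n) * omega TYPE('n) * (2 * real CARD('n)^2 * (1 + real CARD('n))^(CARD('n) - 1))"
  define T where "T = real CARD('n)^(CARD('n) - d) * I"
  define W where "W = 4 * A + 2^(k+1) * A + B + T"
  have Ipos: "0 < I" unfolding I_def by (rule I_pos[OF d1 dN])
  have A0: "0 \<le> A" unfolding A_def using C1c_nonneg[of d, where 'n='n] omega_pos[where 'n='n] by simp
  have B0: "0 \<le> B" unfolding B_def using C2c_nonneg[of d, where 'n='n] omega_pos[where 'n='n] by simp
  have T0: "0 \<le> T" unfolding T_def using Ipos by simp
  have Nd: "CARD('n) - d = Suc k" unfolding k_def using dN by simp
  have key: "\<bar>(\<Sum>z\<in>(int_points Z :: (real^'n) set). 1 / veronese_norm d z) - I * Z ^ (CARD('n) - d)\<bar>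
      \<le> (if k = 0 then 4 * A * (ln Z / ln 2) else 2^(k+1) * A * Z^k) + B * Z^k + T" if Z: "2 \<le> Z" for Z
  proof -
    have J: "Z \<le> 2^(nat \<lceil>log 2 Z\<rceil>)" by (rule J_facts(1)[OF Z])
    have "\<bar>(\<Sum>z\<in>(int_points Z :: (real^'n) set). 1 / veronese_norm d z) - Z^(CARD('n) - d) * I\<bar>
        \<le> integral UNIV (Gf d Z (nat \<lceil>log 2 Z\<rceil>) :: real^'n \<Rightarrow> real)"
      unfolding I_def by (rule diff_bound[OF d1 dN _ J]) (use Z in simp)
    also have "\<dots> \<le> (if k = 0 then 4 * A * (ln Z / ln 2) else 2^(k+1) * A * Z^k) + B * Z^k + T"
      unfolding A_def B_def T_def k_def I_def by (rule V_bound[OF d1 dN Z])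
    finally show ?thesis by (simp add: mult.commute)
  qed
  have c1: "\<exists>C. \<forall>Z::real. Z \<ge> 2 \<longrightarrow>
            \<bar>(\<Sum>z\<in>(int_points Z :: (real^'n) set). 1 / veronese_norm d z) - I * Z ^ (CARD('n) - d)\<bar>
              \<le> C * I * Z ^ (CARD('n) - d) * (ln Z / Z)"
  proof (intro exI allI impI)
    fix Z :: real assume Z: "2 \<le> Z"
    have L: "1 \<le> ln Z / ln 2" using Z by (simp add: le_divide_eq)
    have L0: "0 \<le> ln Z / ln 2" using L by linarith
    have Zk: "1 \<le> Z^k" using Z by simp
    have "(if k = 0 then 4 * A * (ln Z / ln 2) else 2^(k+1) * A * Z^k) + B * Z^k + T
        \<le> W * Z^k * (ln Z / ln 2)"
    proof -
      have a: "(if k = 0 then 4 * A * (ln Z / ln 2) else 2^(k+1) * A * Z^k)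
          \<le> (4 * A + 2^(k+1) * A) * Z^k * (ln Z / ln 2)"
      proof (cases "k = 0")
        case True
        have e1: "(if k = 0 then 4 * A * (ln Z / ln 2) else 2^(k+1) * A * Z^k) = 4 * A * (ln Z / ln 2)"
          using True by simp
        have e2: "(4 * A + 2^(k+1) * A) * Z^k * (ln Z / ln 2) = 4 * A * (ln Z / ln 2) + 2 * A * (ln Z / ln 2)"
          using True by (simp add: algebra_simps)
        have "0 \<le> 2 * A * (ln Z / ln 2)" using A0 L0 by (intro mult_nonneg_nonneg) auto
        then show ?thesis unfolding e1 e2 by linarith
      next
        case False
        have "2^(k+1) * A * Z^k * 1 \<le> 2^(k+1) * A * Z^k * (ln Z / ln 2)"
          using L A0 Zk by (intro mult_left_mono) auto
        moreover have "0 \<le> 4 * A * Z^k * (ln Z / ln 2)" using A0 L0 Zk by (intro mult_nonneg_nonneg) auto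
        ultimately show ?thesis using False by (simp add: algebra_simps)
      qed
      have b: "B * Z^k \<le> B * Z^k * (ln Z / ln 2)" using B0 Zk L
        by (metis mult.right_neutral mult_left_mono mult_nonneg_nonneg order_trans zero_le_one)
      have c: "T \<le> T * Z^k * (ln Z / ln 2)"
      proof -
        have "1 \<le> Z^k * (ln Z / ln 2)" using Zk L by (metis mult_mono' mult.right_neutral order_trans zero_le_one)
        then show ?thesis using T0 by (metis mult.right_neutral mult_left_mono mult.assoc)
      qed
      show ?thesis using a b c unfolding W_def by (simp add: algebra_simps)
    qed
    also have "\<dots> = W / (I * ln 2) * I * Z ^ (CARD('n) - d) * (ln Z / Z)"
      unfolding Nd using Ipos Z by (simp add: field_simps)
    finally show "\<bar>(\<Sum>z\<in>(int_points Z :: (real^'n) set). 1 / veronese_norm d z) - I * Z ^ (CARD('n) - d)\<bar>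
              \<le> W / (I * ln 2) * I * Z ^ (CARD('n) - d) * (ln Z / Z)" using key[OF Z] by linarith
  qed
  have c2: "\<exists>C. \<forall>Z::real. Z \<ge> 2 \<longrightarrow>
            \<bar>(\<Sum>z\<in>(int_points Z :: (real^'n) set). 1 / veronese_norm d z) - I * Z ^ (CARD('n) - d)\<bar>
              \<le> C * I * Z ^ (CARD('n) - d) * (1 / Z)" if "CARD('n) > d + 1"
  proof (intro exI allI impI)
    have k0: "k \<noteq> 0" using that unfolding k_def by simp
    fix Z :: real assume Z: "2 \<le> Z"
    have Zk: "1 \<le> Z^k" using Z by simp
    have "(if k = 0 then 4 * A * (ln Z / ln 2) else 2^(k+1) * A * Z^k) + B * Z^k + T \<le> W * Z^k"
    proof -
      have "T \<le> T * Z^k" using T0 Zk by (metis mult.right_neutral mult_left_mono)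
      moreover have "0 \<le> 4 * A * Z^k" using A0 Zk by simp
      ultimately show ?thesis using k0 unfolding W_def by (simp add: algebra_simps)
    qed
    also have "\<dots> = W / I * I * Z ^ (CARD('n) - d) * (1 / Z)"
      unfolding Nd using Ipos Z by (simp add: field_simps)
    finally show "\<bar>(\<Sum>z\<in>(int_points Z :: (real^'n) set). 1 / veronese_norm d z) - I * Z ^ (CARD('n) - d)\<bar>
              \<le> W / I * I * Z ^ (CARD('n) - d) * (1 / Z)" using key[OF Z] by linarith
  qed
  show ?thesis using c1 c2 by blast
qed

end
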